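(* Consider the Decaying-$\epsilon$-FOCuS procedure (described in the context) on $M>1$ streams, where stream 1 has a change-point at $\nu=0$ (every observation of stream 1 is $\mathcal{N}(\mu_1,1)$ with $\mu_1\ne0$, all other observations $\mathcal{N}(0,1)$). Let $t_0$ be the smallest time step such that for all $t>t_0$, $T_t^{(1)}>\max_{m\in[M]\setminus\{1\}}T_t^{(m)}$. Then $\mathbb{E}_{M,0}[t_0]<\infty$.
   Context: Setting: there are $M$ independent data streams. At each time $t=1,2,\dots$ an agent selects one stream $A_t\in\{1,\dots,M\}$ and observes one value $X_t\in\mathbb{R}$ from it. The $i$-th observation taken from stream $m$ is denoted $X_i^{(m)}$. Pre-change observations are $\mathcal{N}(0,1)$. Stream 1 has a change-point $\nu$: if $A_t=1$ and $t>\nu$ then $X_t\sim\mathcal{N}(\mu_1,1)$ with $\mu_1\neq0$; otherwise $X_t\sim\mathcal{N}(0,1)$; observations are conditionally independent given the selections. $\mathbb{E}_{M,\nu}$ denotes expectation for $M$ streams with change at $\nu$ in stream 1. $\mathcal{F}_t=\sigma(A_1,X_1,\dots,A_t,X_t)$. The sampling process and statistics are defined for all $t\ge 0$. Decaying-$\epsilon$-FOCuS: let $N_t^{(m)}$ be the number of times stream $m$ was selected up to and including time $t$. The local GLR statistic is $T_t^{(m)}=\max_{0\le k<N_t^{(m)}}\frac{(\sum_{i=k+1}^{N_t^{(m)}}X_i^{(m)})^2}{2(N_t^{(m)}-k)}$ (and $T_t^{(m)}=0$ if $N_t^{(m)}=0$); $M_t=\arg\max_m T_t^{(m)}$. The local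 change-point estimate $\hat\nu_t^{(m)}$ is the time at which stream $m$'s $\hat k$-th observation was taken, where $\hat k$ is the maximizing index $k$ in $T_t^{(m)}$ (time $0$ if $\hat k=0$ or $N_t^{(m)}=0$); the global estimate is $\hat\nu_t=\hat\nu_t^{(M_t)}$; ties are broken uniformly at random. Initially $\hat\nu_0=0$, $M_0$ uniform on $[M]$. At time $t$, set $\epsilon_t=\min\{1, M/\max(1,t-\hat\nu_{t-1})^{1/3}\}$, draw $G_t\sim\mathrm{Bernoulli}(\epsilon_t)$ (conditionally on $\mathcal{F}_{t-1}$); if $G_t=1$ choose $A_t$ uniformly from $[M]$, otherwise $A_t=M_{t-1}$; then observe $X_t$ and update the statistics. *)

theory Defs
  imports "HOL-Probability.Probability"
begin

text \<open>Noise m i : noise of the i-th observation taken from stream m (standard normal);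
  Gate t    : uniform [0,1], G_t = (Gate t < eps_t)  (Bernoulli(eps_t));
  Pick t    : uniform [0,1], used to pick a uniform stream in {1..M} when exploring;
  TieM t    : uniform [0,1], uniform tie-breaking for M_t;
  TieK t    : uniform [0,1], uniform tie-breaking for the maximising index k.\<close>

datatype idx = Noise nat nat | Gate nat | Pick nat | TieM nat | TieK nat

text \<open>Streams are 1..M; stream 1 has change at nu = 0, so every observation of it
  has mean mu.  The i-th observation (i >= 1) of stream m:\<close>
definition obs :: "real \<Rightarrow> (idx \<Rightarrow> real) \<Rightarrow> nat \<Rightarrow> nat \<Rightarrow> real" where
  "obs mu y m i = (if m = 1 then mu else 0) + y (Noise m i)"

text \<open>A history is the list [A_1, ..., A_t] of selected streams.\<close>
definition Afun :: "nat list \<Rightarrow> nat \<Rightarrow> nat" where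
  "Afun as s = (if 1 \<le> s \<and> s \<le> length as then as ! (s - 1) else 0)"

definition Nc :: "nat list \<Rightarrow> nat \<Rightarrow> nat \<Rightarrow> nat" where
  "Nc as m t = card {s \<in> {1..t}. Afun as s = m}"

definition Tterm :: "(nat \<Rightarrow> real) \<Rightarrow> nat \<Rightarrow> nat \<Rightarrow> real" where
  "Tterm x n k = (\<Sum>i = k+1..n. x i)\<^sup>2 / (2 * real (n - k))"

definition Tstat :: "(nat \<Rightarrow> real) \<Rightarrow> nat \<Rightarrow> real" where
  "Tstat x n = (if n = 0 then 0 else Max (Tterm x n ` {..<n}))"

text \<open>Uniform choice from a finite nonempty set S driven by w uniform on [0,1].\<close>
definition pick_tie :: "real \<Rightarrow> nat set \<Rightarrow> nat" where
  "pick_tie w S = (let l = sorted_list_of_set S in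
       l ! min (nat \<lfloor>w * real (length l)\<rfloor>) (length l - 1))"

definition Tm :: "real \<Rightarrow> (idx \<Rightarrow> real) \<Rightarrow> nat list \<Rightarrow> nat \<Rightarrow> nat \<Rightarrow> real" where
  "Tm mu y as t m = Tstat (obs mu y m) (Nc as m t)"

text \<open>M_t (for t = 0 all statistics vanish, so M_0 is uniform on {1..M}).\<close>
definition Mt :: "nat \<Rightarrow> real \<Rightarrow> (idx \<Rightarrow> real) \<Rightarrow> nat list \<Rightarrow> nat \<Rightarrow> nat" where
  "Mt M mu y as t = pick_tie (y (TieM t))
     {m \<in> {1..M}. Tm mu y as t m = Max (Tm mu y as t ` {1..M})}"

definition khat :: "(nat \<Rightarrow> real) \<Rightarrow> nat \<Rightarrow> real \<Rightarrow> nat" where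
  "khat x n w = (if n = 0 then 0 else pick_tie w {k \<in> {..<n}. Tterm x n k = Tstat x n})"

definition sel_time :: "nat list \<Rightarrow> nat \<Rightarrow> nat \<Rightarrow> nat" where
  "sel_time as m k = (if k = 0 then 0 else (LEAST s. Nc as m s = k))"

definition nuhat :: "nat \<Rightarrow> real \<Rightarrow> (idx \<Rightarrow> real) \<Rightarrow> nat list \<Rightarrow> nat \<Rightarrow> nat" where
  "nuhat M mu y as t = (let m = Mt M mu y as t; n = Nc as m t in
      if n = 0 then 0 else sel_time as m (khat (obs mu y m) n (y (TieK t))))"

definition eps :: "nat \<Rightarrow> nat \<Rightarrow> nat \<Rightarrow> real" where
  "eps M nu t = min 1 (real M / (max 1 (real t - real nu)) powr (1/3))"

definition next_choice :: "nat \<Rightarrow> real \<Rightarrow> (idx \<Rightarrow> real) \<Rightarrow> nat list \<Rightarrow> nat \<Rightarrow> nat" where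
  "next_choice M mu y as t =
     (if y (Gate t) < eps M (nuhat M mu y as (t - 1)) t
      then min M (1 + nat \<lfloor>real M * y (Pick t)\<rfloor>)
      else Mt M mu y as (t - 1))"

fun hist :: "nat \<Rightarrow> real \<Rightarrow> (idx \<Rightarrow> real) \<Rightarrow> nat \<Rightarrow> nat list" where
  "hist M mu y 0 = []"
| "hist M mu y (Suc t) = hist M mu y t @ [next_choice M mu y (hist M mu y t) (Suc t)]"

definition T_run :: "nat \<Rightarrow> real \<Rightarrow> (idx \<Rightarrow> real) \<Rightarrow> nat \<Rightarrow> nat \<Rightarrow> real" where
  "T_run M mu y t m = Tm mu y (hist M mu y t) t m"

definition dominates_after :: "nat \<Rightarrow> real \<Rightarrow> (idx \<Rightarrow> real) \<Rightarrow> nat \<Rightarrow> bool" where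
  "dominates_after M mu y t0 = (\<forall>t > t0. T_run M mu y t 1 > Max ((T_run M mu y t) ` ({1..M} - {1})))"

definition t0 :: "nat \<Rightarrow> real \<Rightarrow> (idx \<Rightarrow> real) \<Rightarrow> enat" where
  "t0 M mu y = (if \<exists>t. dominates_after M mu y t then enat (LEAST t. dominates_after M mu y t) else \<infinity>)"

end

theory Submission
  imports Defs "HOL-Probability.Probability"
begin



lemma length_hist[simp]: "length (hist M mu y t) = t"
  by (induction t) auto

lemma hist_nth: "s < t \<Longrightarrow> hist M mu y t ! s = next_choice M mu y (hist M mu y s) (Suc s)"
proof (induction t)
  case 0 then show ?case by simp
next
  case (Suc t)
  then show ?case
    by (cases "s < t") (auto simp: nth_append less_Suc_eq)
qed

lemma Afun_hist: "1 \<le> s \<Longrightarrow> s \<le> t \<Longrightarrow> Afun (hist M mu y t) s = next_choice M mu y (hist M mu y (s-1)) s"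
  unfolding Afun_def using hist_nth[of "s-1" t M mu y] by auto

lemma Nc_le: "Nc as m t \<le> t"
proof -
  have "Nc as m t \<le> card {1..t}" unfolding Nc_def by (rule card_mono) auto
  then show ?thesis by simp
qed

lemma eps_ge:
  assumes "1 \<le> s" "M \<ge> 1"
  shows "1 / real s powr (1/3) \<le> eps M nu s"
proof -
  have s: "real s \<ge> 1" using assms by simp
  have m: "max 1 (real s - real nu) \<le> real s" using s by simp
  have p: "max 1 (real s - real nu) powr (1/3) \<le> real s powr (1/3)"
    by (rule powr_mono2) (use m in auto)
  have pos: "max 1 (real s - real nu) powr (1/3) > 0" by simp
  have "1 / real s powr (1/3) \<le> 1 / max 1 (real s - real nu) powr (1/3)"
    using p pos by (simp add: frac_le)
  also have "\<dots> \<le> real M / max 1 (real s - real nu) powr (1/3)"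
    using assms pos by (simp add: divide_right_mono)
  finally have 1: "1 / real s powr (1/3) \<le> real M / max 1 (real s - real nu) powr (1/3)" .
  have 2: "1 / real s powr (1/3) \<le> 1" using s
    by (simp add: ge_one_powr_ge_zero)
  show ?thesis unfolding eps_def using 1 2 by simp
qed

lemma next_choice_1:
  assumes "1 \<le> s" "M \<ge> 1"
    and "y (Gate s) < 1 / real s powr (1/3)" "0 \<le> y (Pick s)" "y (Pick s) < 1 / real M"
  shows "next_choice M mu y as s = 1"
proof -
  have g: "y (Gate s) < eps M (nuhat M mu y as (s - 1)) s"
    using assms(3) eps_ge[OF assms(1,2)] by (meson less_le_trans)
  have "real M * y (Pick s) < 1" using assms(2,5)
    by (simp add: field_simps)
  moreover have "0 \<le> real M * y (Pick s)" using assms(4) by simp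
  ultimately have "\<lfloor>real M * y (Pick s)\<rfloor> = 0" by (simp add: floor_eq_iff)
  then show ?thesis unfolding next_choice_def using g assms(2) by simp
qed

definition Bset :: "nat \<Rightarrow> (idx \<Rightarrow> real) \<Rightarrow> nat \<Rightarrow> nat set" where
  "Bset M y t = {s \<in> {1..t}. y (Gate s) < 1 / real s powr (1/3) \<and> 0 \<le> y (Pick s) \<and> y (Pick s) < 1 / real M}"

lemma Nc1_ge: "M \<ge> 1 \<Longrightarrow> card (Bset M y t) \<le> Nc (hist M mu y t) 1 t"
  unfolding Nc_def Bset_def
proof (rule card_mono)
  assume M: "M \<ge> 1"
  show "{s \<in> {1..t}. y (Gate s) < 1 / real s powr (1/3) \<and> 0 \<le> y (Pick s) \<and> y (Pick s) < 1 / real M}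
    \<subseteq> {s \<in> {1..t}. Afun (hist M mu y t) s = 1}"
  proof safe
    fix s assume "s \<in> {1..t}" "y (Gate s) < 1 / real s powr (1/3)" "0 \<le> y (Pick s)" "y (Pick s) < 1 / real M"
    then show "Afun (hist M mu y t) s = 1"
      using Afun_hist[of s t M mu y] next_choice_1[of s M y mu] M by auto
  qed
qed auto

lemma Tstat_ge: "0 < n \<Longrightarrow> Tterm x n k \<le> Tstat x n \<or> k \<ge> n"
  unfolding Tstat_def by (auto intro!: Max_ge)

lemma Tstat_less: "0 < c \<Longrightarrow> (\<And>k. k < n \<Longrightarrow> Tterm x n k < c) \<Longrightarrow> Tstat x n < c"
proof -
  assume c: "0 < c" and h: "\<And>k. k < n \<Longrightarrow> Tterm x n k < c"
  show ?thesis
  proof (cases "n = 0")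
    case False
    then have "Max (Tterm x n ` {..<n}) < c"
      by (subst Max_less_iff) (use h in auto)
    then show ?thesis unfolding Tstat_def using False by simp
  qed (use c in \<open>simp add: Tstat_def\<close>)
qed

lemma sq_lower:
  fixes a w N :: real
  assumes "N > 0" "\<bar>w\<bar> \<le> \<bar>a\<bar> * N / 2"
  shows "a\<^sup>2 * N / 8 \<le> (N * a + w)\<^sup>2 / (2 * N)"
proof -
  have "\<bar>N * a + w\<bar> \<ge> \<bar>a\<bar> * N / 2"
    using assms by (auto simp: abs_if split: if_splits) (auto simp: algebra_simps)
  then have "(\<bar>a\<bar> * N / 2)\<^sup>2 \<le> \<bar>N * a + w\<bar>\<^sup>2"
    using assms by (intro power_mono) auto
  then have "a\<^sup>2 * N\<^sup>2 / 4 \<le> (N * a + w)\<^sup>2" by (simp add: power_mult_distrib power_divide)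
  then show ?thesis using assms by (simp add: field_simps power2_eq_square)
qed

lemma dom_det:
  assumes M: "M > 1" and mu0: "mu \<noteq> 0" and beta: "\<beta> > 0" and B: "real (card (Bset M y t)) \<ge> \<beta>"
    and H2: "\<And>n. \<beta> \<le> real n \<Longrightarrow> n \<le> t \<Longrightarrow> \<bar>\<Sum>i=1..n. y (Noise 1 i)\<bar> \<le> \<bar>mu\<bar> * real n / 2"
    and H3: "\<And>m k n. m \<in> {2..M} \<Longrightarrow> k < n \<Longrightarrow> n \<le> t \<Longrightarrow>
        (\<Sum>i=k+1..n. y (Noise m i))\<^sup>2 < mu\<^sup>2 * \<beta> * real (n - k) / 4"
  shows "T_run M mu y t 1 > Max ((T_run M mu y t) ` ({1..M} - {1}))"
proof -
  define N where "N = Nc (hist M mu y t) 1 t"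
  have NB: "real N \<ge> \<beta>" using Nc1_ge[of M y t mu] M B unfolding N_def by linarith
  have Npos: "N > 0" using NB beta by (cases N) auto
  have Nt: "N \<le> t" unfolding N_def by (rule Nc_le)
  have "Tterm (obs mu y 1) N 0 \<le> Tstat (obs mu y 1) N" using Tstat_ge[OF Npos, of "obs mu y 1" 0] Npos by auto
  moreover have "Tterm (obs mu y 1) N 0 = (real N * mu + (\<Sum>i=1..N. y (Noise 1 i)))\<^sup>2 / (2 * real N)"
    unfolding Tterm_def obs_def by (simp add: sum.distrib)
  moreover have "mu\<^sup>2 * real N / 8 \<le> (real N * mu + (\<Sum>i=1..N. y (Noise 1 i)))\<^sup>2 / (2 * real N)"
    by (rule sq_lower) (use Npos H2[OF NB Nt] in auto)
  moreover have "mu\<^sup>2 * \<beta> / 8 \<le> mu\<^sup>2 * real N / 8"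
    using NB by (simp add: mult_left_mono)
  ultimately have T1: "mu\<^sup>2 * \<beta> / 8 \<le> T_run M mu y t 1"
    unfolding T_run_def Tm_def N_def by linarith
  have c: "0 < mu\<^sup>2 * \<beta> / 8" using mu0 beta by simp
  have Tm: "T_run M mu y t m < mu\<^sup>2 * \<beta> / 8" if m: "m \<in> {1..M} - {1}" for m
  proof -
    define Nm where "Nm = Nc (hist M mu y t) m t"
    have Nmt: "Nm \<le> t" unfolding Nm_def by (rule Nc_le)
    have "Tstat (obs mu y m) Nm < mu\<^sup>2 * \<beta> / 8"
    proof (rule Tstat_less[OF c])
      fix k assume k: "k < Nm"
      have m2: "m \<in> {2..M}" using m by auto
      have S: "(\<Sum>i=k+1..Nm. y (Noise m i))\<^sup>2 < mu\<^sup>2 * \<beta> * real (Nm - k) / 4"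
        by (rule H3[OF m2 k Nmt])
      have pos: "real (Nm - k) > 0" using k by simp
      have "Tterm (obs mu y m) Nm k = (\<Sum>i=k+1..Nm. y (Noise m i))\<^sup>2 / (2 * real (Nm - k))"
        unfolding Tterm_def obs_def using m by simp
      also have "\<dots> < mu\<^sup>2 * \<beta> / 8"
        using S pos by (simp add: field_simps)
      finally show "Tterm (obs mu y m) Nm k < mu\<^sup>2 * \<beta> / 8" .
    qed
    then show ?thesis unfolding T_run_def Tm_def Nm_def .
  qed
  have "M \<in> {1..M} - {1}" using M by auto
  then have ne: "{1..M} - {1} \<noteq> {}" by blast
  have "Max ((T_run M mu y t) ` ({1..M} - {1})) < mu\<^sup>2 * \<beta> / 8"
    by (subst Max_less_iff) (use ne Tm in auto)
  then show ?thesis using T1 by linarith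
qed




context
  fixes P :: "'a measure" and Y :: "idx \<Rightarrow> 'a \<Rightarrow> real"
  assumes Ymeas[measurable]: "\<And>i. Y i \<in> borel_measurable P"
begin

lemma meas_Tterm[measurable]: "(\<lambda>\<omega>. Tterm (obs mu (\<lambda>i. Y i \<omega>) m) n k) \<in> borel_measurable P"
  unfolding Tterm_def obs_def by measurable

lemma meas_Tstat[measurable]: "(\<lambda>\<omega>. Tstat (obs mu (\<lambda>i. Y i \<omega>) m) n) \<in> borel_measurable P"
  unfolding Tstat_def by (auto intro!: borel_measurable_Max)

lemma meas_Tm[measurable]: "(\<lambda>\<omega>. Tm mu (\<lambda>i. Y i \<omega>) as t m) \<in> borel_measurable P"
  unfolding Tm_def by measurable

lemma meas_pick_fixed: 
  assumes [measurable]: "w \<in> borel_measurable P"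
  shows "(\<lambda>\<omega>. pick_tie (w \<omega>) A) \<in> measurable P (count_space UNIV)"
  unfolding pick_tie_def Let_def by measurable

lemma meas_pick:
  assumes F: "finite F" and S: "\<And>\<omega>. \<omega> \<in> space P \<Longrightarrow> S \<omega> \<subseteq> F"
    and SA: "\<And>A. A \<subseteq> F \<Longrightarrow> {\<omega> \<in> space P. S \<omega> = A} \<in> sets P"
    and w[measurable]: "w \<in> borel_measurable P"
  shows "(\<lambda>\<omega>. pick_tie (w \<omega>) (S \<omega>)) \<in> measurable P (count_space UNIV)"
  unfolding measurable_count_space_eq2_countable
proof safe
  fix a :: nat
  have "(\<lambda>\<omega>. pick_tie (w \<omega>) (S \<omega>)) -` {a} \<inter> space P
     = (\<Union>A\<in>Pow F. {\<omega> \<in> space P. S \<omega> = A} \<inter> ((\<lambda>\<omega>. pick_tie (w \<omega>) A) -` {a} \<inter> space P))"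
    using S by auto
  also have "\<dots> \<in> sets P"
    using F SA meas_pick_fixed[OF w, THEN measurable_sets]
    by (intro sets.finite_UN) auto
  finally show "(\<lambda>\<omega>. pick_tie (w \<omega>) (S \<omega>)) -` {a} \<inter> space P \<in> sets P" .
qed simp

lemma meas_Mt[measurable]: "(\<lambda>\<omega>. Mt M mu (\<lambda>i. Y i \<omega>) as t) \<in> measurable P (count_space UNIV)"
  unfolding Mt_def
proof (rule meas_pick[where F = "{1..M}"])
  fix A assume "A \<subseteq> {1..M}"
  then have "{\<omega> \<in> space P. {m \<in> {1..M}. Tm mu (\<lambda>i. Y i \<omega>) as t m = Max ((\<lambda>m. Tm mu (\<lambda>i. Y i \<omega>) as t m) ` {1..M})} = A}
    = {\<omega> \<in> space P. \<forall>m\<in>{1..M}. (Tm mu (\<lambda>i. Y i \<omega>) as t m = Max ((\<lambda>m. Tm mu (\<lambda>i. Y i \<omega>) as t m) ` {1..M})) = (m \<in> A)}"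
    by auto
  also have "\<dots> \<in> sets P"
    by (measurable; (intro borel_measurable_Max)?; simp)
  finally show "{\<omega> \<in> space P. {m \<in> {1..M}. Tm mu (\<lambda>i. Y i \<omega>) as t m = Max (Tm mu (\<lambda>i. Y i \<omega>) as t ` {1..M})} = A} \<in> sets P" .
qed auto

lemma meas_khat[measurable]: "(\<lambda>\<omega>. khat (obs mu (\<lambda>i. Y i \<omega>) m) n (Y (TieK t) \<omega>)) \<in> measurable P (count_space UNIV)"
proof (cases "n = 0")
  case True then show ?thesis unfolding khat_def by simp
next
  case False
  have "(\<lambda>\<omega>. pick_tie (Y (TieK t) \<omega>) {k \<in> {..<n}. Tterm (obs mu (\<lambda>i. Y i \<omega>) m) n k = Tstat (obs mu (\<lambda>i. Y i \<omega>) m) n})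
    \<in> measurable P (count_space UNIV)"
  proof (rule meas_pick[where F = "{..<n}"])
    fix A assume "A \<subseteq> {..<n}"
    then have "{\<omega> \<in> space P. {k \<in> {..<n}. Tterm (obs mu (\<lambda>i. Y i \<omega>) m) n k = Tstat (obs mu (\<lambda>i. Y i \<omega>) m) n} = A}
      = {\<omega> \<in> space P. \<forall>k\<in>{..<n}. (Tterm (obs mu (\<lambda>i. Y i \<omega>) m) n k = Tstat (obs mu (\<lambda>i. Y i \<omega>) m) n) = (k \<in> A)}"
      by auto
    also have "\<dots> \<in> sets P" by measurable
    finally show "{\<omega> \<in> space P. {k \<in> {..<n}. Tterm (obs mu (\<lambda>i. Y i \<omega>) m) n k = Tstat (obs mu (\<lambda>i. Y i \<omega>) m) n} = A} \<in> sets P" .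
  qed auto
  then show ?thesis unfolding khat_def using False by simp
qed

lemma meas_nuhat[measurable]: "(\<lambda>\<omega>. nuhat M mu (\<lambda>i. Y i \<omega>) as t) \<in> measurable P (count_space UNIV)"
proof -
  have "(\<lambda>\<omega>. (\<lambda>m \<omega>. if Nc as m t = 0 then 0 else sel_time as m (khat (obs mu (\<lambda>i. Y i \<omega>) m) (Nc as m t) (Y (TieK t) \<omega>)))
      (Mt M mu (\<lambda>i. Y i \<omega>) as t) \<omega>) \<in> measurable P (count_space UNIV)"
    by (rule measurable_compose_countable[OF _ meas_Mt]) measurable
  then show ?thesis unfolding nuhat_def Let_def by simp
qed

lemma meas_next_choice[measurable]: "(\<lambda>\<omega>. next_choice M mu (\<lambda>i. Y i \<omega>) as t) \<in> measurable P (count_space UNIV)"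
proof -
  have e: "(\<lambda>\<omega>. eps M (nuhat M mu (\<lambda>i. Y i \<omega>) as (t - 1)) t) \<in> borel_measurable P"
    by (rule measurable_compose_countable[OF _ meas_nuhat, where f = "\<lambda>n \<omega>. eps M n t"]) simp
  show ?thesis unfolding next_choice_def using e by measurable
qed

lemma meas_hist[measurable]: "(\<lambda>\<omega>. hist M mu (\<lambda>i. Y i \<omega>) t) \<in> measurable P (count_space UNIV)"
proof (induction t)
  case 0 then show ?case by simp
next
  case (Suc t)
  have "(\<lambda>\<omega>. (\<lambda>as \<omega>. as @ [next_choice M mu (\<lambda>i. Y i \<omega>) as (Suc t)]) (hist M mu (\<lambda>i. Y i \<omega>) t) \<omega>)
     \<in> measurable P (count_space UNIV)"
    by (rule measurable_compose_countable[OF _ Suc]) measurable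
  then show ?case by simp
qed

lemma meas_T_run[measurable]: "(\<lambda>\<omega>. T_run M mu (\<lambda>i. Y i \<omega>) t m) \<in> borel_measurable P"
proof -
  have "(\<lambda>\<omega>. (\<lambda>as \<omega>. Tm mu (\<lambda>i. Y i \<omega>) as t m) (hist M mu (\<lambda>i. Y i \<omega>) t) \<omega>) \<in> borel_measurable P"
    by (rule measurable_compose_countable[OF _ meas_hist]) measurable
  then show ?thesis unfolding T_run_def by simp
qed

lemma meas_dom: "{\<omega> \<in> space P. dominates_after M mu (\<lambda>i. Y i \<omega>) n} \<in> sets P"
proof -
  have [measurable]: "(\<lambda>\<omega>. Max ((\<lambda>m. T_run M mu (\<lambda>i. Y i \<omega>) t m) ` ({1..M} - {1}))) \<in> borel_measurable P" for t
    by (intro borel_measurable_Max) auto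
  show ?thesis unfolding dominates_after_def by measurable
qed

lemma pred_dom[measurable]: "Measurable.pred P (\<lambda>\<omega>. dominates_after M mu (\<lambda>i. Y i \<omega>) n)"
  unfolding pred_def using meas_dom by simp

lemma meas_t0: "(\<lambda>\<omega>. t0 M mu (\<lambda>i. Y i \<omega>)) \<in> measurable P (count_space UNIV)"
  unfolding t0_def by measurable

end



definition C18 :: real where "C18 = fact 18 / (2^9 * fact 9)"

context
  fixes P :: "'a measure" and Y :: "idx \<Rightarrow> 'a \<Rightarrow> real"
  assumes ps: "prob_space P"
    and indep: "prob_space.indep_vars P (\<lambda>_. borel) Y UNIV"
    and normal: "\<And>m i. distributed P lborel (Y (Noise m i)) (\<lambda>x. ennreal (normal_density 0 1 x))"
begin

interpretation prob_space P by (rule ps)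

lemma Ymeas[measurable]: "Y i \<in> borel_measurable P"
  using indep unfolding indep_vars_def by auto

lemma W_normal:
  assumes "k < n"
  shows "distributed P lborel (\<lambda>\<omega>. \<Sum>i=k+1..n. Y (Noise m i) \<omega>) (\<lambda>x. ennreal (normal_density 0 (sqrt (real (n - k))) x))"
proof -
  let ?I = "Noise m ` {k+1..n}"
  have "distributed P lborel (\<lambda>x. \<Sum>i\<in>?I. Y i x) (normal_density (\<Sum>i\<in>?I. 0) (sqrt (\<Sum>i\<in>?I. 1\<^sup>2)))"
    by (rule sum_indep_normal[where \<sigma> = "\<lambda>_. 1" and \<mu> = "\<lambda>_. 0"])
       (use assms in \<open>auto intro: indep_vars_subset[OF indep] normal\<close>)
  moreover have "(\<lambda>x. \<Sum>i\<in>?I. Y i x) = (\<lambda>\<omega>. \<Sum>i=k+1..n. Y (Noise m i) \<omega>)"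
    by (auto simp: sum.reindex inj_on_def)
  moreover have "(\<Sum>i\<in>?I. (1::real)\<^sup>2) = real (n - k)"
    by (simp add: card_image inj_on_def)
  ultimately show ?thesis by simp
qed

lemma W_tail:
  assumes "k < n" "r > 0"
  shows "prob {\<omega> \<in> space P. r * sqrt (real (n - k)) \<le> \<bar>\<Sum>i=k+1..n. Y (Noise m i) \<omega>\<bar>} \<le> C18 / r ^ 18"
proof -
  define d where "d = sqrt (real (n - k))"
  have d: "d > 0" using assms unfolding d_def by simp
  define Z where "Z = (\<lambda>\<omega>. (\<Sum>i=k+1..n. Y (Noise m i) \<omega>) / d)"
  have Zd: "distributed P lborel Z (\<lambda>x. ennreal (std_normal_density x))"
    using W_normal[OF assms(1), of m] normal_standard_normal_convert[OF d, of _ 0]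
    unfolding Z_def d_def by simp
  have [measurable]: "Z \<in> borel_measurable P" unfolding Z_def by measurable
  have int: "integrable P (\<lambda>\<omega>. Z \<omega> ^ 18)"
    using distributed_integrable[OF Zd, of "\<lambda>x. x ^ 18"] integrable_std_normal_moment[of 18] by simp
  have EZ: "(\<integral>\<omega>. Z \<omega> ^ 18 \<partial>P) = C18"
    using distributed_integral[OF Zd, of "\<lambda>x. x ^ 18"] integral_std_normal_moment_even[of 9]
    unfolding C18_def by simp
  have sub: "{\<omega> \<in> space P. r * d \<le> \<bar>\<Sum>i=k+1..n. Y (Noise m i) \<omega>\<bar>} = {\<omega> \<in> space P. r ^ 18 \<le> Z \<omega> ^ 18}"
  proof -
    have "r * d \<le> \<bar>w\<bar> \<longleftrightarrow> r ^ 18 \<le> (w / d) ^ 18" for w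
    proof -
      have "r * d \<le> \<bar>w\<bar> \<longleftrightarrow> r \<le> \<bar>w / d\<bar>" using d by (simp add: field_simps)
      also have "\<dots> \<longleftrightarrow> r ^ 18 \<le> \<bar>w / d\<bar> ^ 18"
        using assms(2) by (simp add: power_mono_iff)
      also have "\<bar>w / d\<bar> ^ 18 = (w / d) ^ 18" by (rule power_even_abs) simp
      finally show ?thesis .
    qed
    then show ?thesis unfolding Z_def by auto
  qed
  have "prob {\<omega> \<in> space P. r ^ 18 \<le> Z \<omega> ^ 18} \<le> (\<integral>\<omega>. Z \<omega> ^ 18 \<partial>P) / r ^ 18"
    by (rule integral_Markov_inequality_measure[OF int]) (use assms(2) in auto)
  then show ?thesis using sub EZ unfolding d_def by simp
qed

end



lemma unif_prob:
  assumes ps: "prob_space P" and D: "distributed P lborel X (indicator {0..1})"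
    and A: "A \<in> sets borel" and AI: "{0..1} \<inter> A = {a..<b}" and ab: "a \<le> b"
  shows "measure P (X -` A \<inter> space P) = b - a"
proof -
  interpret prob_space P by (rule ps)
  have "emeasure P (X -` A \<inter> space P) = (\<integral>\<^sup>+x. indicator {0..1} x * indicator A x \<partial>lborel)"
    using distributed_emeasure[OF D] A by simp
  also have "\<dots> = (\<integral>\<^sup>+x. indicator ({0..1} \<inter> A) x \<partial>lborel)"
    by (simp add: indicator_inter_arith)
  also have "\<dots> = emeasure lborel {a..<b}" using AI by simp
  also have "\<dots> = ennreal (b - a)" using ab by simp
  finally show ?thesis by (simp add: measure_def ab)
qed

context
  fixes P :: "'a measure" and Y :: "idx \<Rightarrow> 'a \<Rightarrow> real" and M :: nat
  assumes ps: "prob_space P"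
    and indep: "prob_space.indep_vars P (\<lambda>_. borel) Y UNIV"
    and gate: "\<And>t. distributed P lborel (Y (Gate t)) (indicator {0..1})"
    and pick: "\<And>t. distributed P lborel (Y (Pick t)) (indicator {0..1})"
    and M1: "M \<ge> 1"
begin

interpretation prob_space P by (rule ps)

lemma Ymeas'[measurable]: "Y i \<in> borel_measurable P"
  using indep unfolding indep_vars_def by auto

definition xi :: "nat \<Rightarrow> 'a \<Rightarrow> real" where
  "xi s \<omega> = (if Y (Gate s) \<omega> < 1 / real s powr (1/3) \<and> 0 \<le> Y (Pick s) \<omega> \<and> Y (Pick s) \<omega> < 1 / real M then 1 else 0)"

lemma xi_meas[measurable]: "xi s \<in> borel_measurable P"
  unfolding xi_def by measurable

lemma xi_indep: "indep_vars (\<lambda>_. borel) xi S"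
proof -
  define K where "K s = {Gate s, Pick s}" for s
  have R: "indep_vars (\<lambda>s. PiM (K s) (\<lambda>_. borel)) (\<lambda>s \<omega>. restrict (\<lambda>i. Y i \<omega>) (K s)) S"
    by (rule indep_vars_restrict[OF indep]) (auto simp: K_def disjoint_family_on_def)
  define h where "h s f = (if f (Gate s) < 1 / real s powr (1/3) \<and> 0 \<le> f (Pick s) \<and> f (Pick s) < 1 / real M then 1 else (0::real))"
    for s and f :: "idx \<Rightarrow> real"
  have hm: "h s \<in> measurable (PiM (K s) (\<lambda>_. borel)) borel" for s
  proof -
    have [measurable]: "(\<lambda>f. f (Gate s)) \<in> measurable (PiM (K s) (\<lambda>_. borel)) borel"
      by (rule measurable_component_singleton) (simp add: K_def)
    have [measurable]: "(\<lambda>f. f (Pick s)) \<in> measurable (PiM (K s) (\<lambda>_. borel)) borel"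
      by (rule measurable_component_singleton) (simp add: K_def)
    show ?thesis unfolding h_def by measurable
  qed
  have "indep_vars (\<lambda>_. borel) (\<lambda>s \<omega>. h s (restrict (\<lambda>i. Y i \<omega>) (K s))) S"
    by (rule indep_vars_compose2[OF R hm])
  moreover have "(\<lambda>s \<omega>. h s (restrict (\<lambda>i. Y i \<omega>) (K s))) = xi"
    by (auto simp: h_def K_def xi_def fun_eq_iff)
  ultimately show ?thesis by simp
qed

lemma xi_exp:
  assumes "s \<ge> 1"
  shows "expectation (xi s) = (1 / real s powr (1/3)) * (1 / real M)"
proof -
  define g where "g = 1 / real s powr (1/3)"
  have g0: "0 < g" and g1: "g \<le> 1" using assms unfolding g_def
    by (auto simp: ge_one_powr_ge_zero)
  define A where "A i = (if i = Gate s then {..<g} else {0..<1 / real M})" for i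
  have ev: "{\<omega> \<in> space P. xi s \<omega> = 1} = (\<Inter>i\<in>{Gate s, Pick s}. Y i -` A i \<inter> space P)"
    by (auto simp: xi_def A_def g_def)
  define E where "E = {\<omega>. Y (Gate s) \<omega> < g \<and> 0 \<le> Y (Pick s) \<omega> \<and> Y (Pick s) \<omega> < 1 / real M}"
  have xiE: "xi s = indicator E" by (auto simp: xi_def E_def g_def fun_eq_iff)
  have ev: "E \<inter> space P = (\<Inter>i\<in>{Gate s, Pick s}. Y i -` A i \<inter> space P)"
    by (auto simp: E_def A_def)
  have "prob (\<Inter>i\<in>{Gate s, Pick s}. Y i -` A i \<inter> space P) = (\<Prod>i\<in>{Gate s, Pick s}. prob (Y i -` A i \<inter> space P))"
    by (rule indep_varsD[OF indep]) (auto simp: A_def)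
  also have "\<dots> = prob (Y (Gate s) -` {..<g} \<inter> space P) * prob (Y (Pick s) -` {0..<1 / real M} \<inter> space P)"
    by (simp add: A_def)
  also have "prob (Y (Gate s) -` {..<g} \<inter> space P) = g - 0"
    by (rule unif_prob[OF ps gate]) (use g0 g1 in auto)
  also have "prob (Y (Pick s) -` {0..<1 / real M} \<inter> space P) = 1 / real M - 0"
  proof (rule unif_prob[OF ps pick])
    have "1 / real M \<le> 1" using M1 by simp
    then show "{0..1} \<inter> {0..<1 / real M} = {0..<1 / real M}" by auto
  qed auto
  finally have "prob (E \<inter> space P) = g * (1 / real M)" using ev by simp
  then show ?thesis unfolding xiE g_def by simp
qed

lemma card_Bset_sum: "real (card (Bset M (\<lambda>i. Y i \<omega>) t)) = (\<Sum>s\<in>{1..t}. xi s \<omega>)"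
proof -
  have "real (card (Bset M (\<lambda>i. Y i \<omega>) t)) = (\<Sum>s\<in>Bset M (\<lambda>i. Y i \<omega>) t. 1)"
    by simp
  also have "\<dots> = (\<Sum>s\<in>{1..t}. xi s \<omega>)"
    unfolding Bset_def xi_def by (subst sum.inter_filter) auto
  finally show ?thesis .
qed

lemma u_cube: "(real t powr (1/3)) ^ 3 = real t"
proof -
  have "(real t powr (1/3)) ^ 3 = real t powr (1/3 + 1/3 + 1/3)"
    unfolding power3_eq_cube by (simp only: powr_add)
  then show ?thesis by simp
qed

lemma B_tail:
  assumes t: "t \<ge> 1"
  shows "prob {\<omega> \<in> space P. real (card (Bset M (\<lambda>i. Y i \<omega>) t)) < (real t powr (1/3))\<^sup>2 / (2 * real M)}
     \<le> exp (- (real t powr (1/3)) / (2 * (real M)\<^sup>2))"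
proof -
  define u where "u = real t powr (1/3)"
  have u0: "u > 0" using t unfolding u_def by simp
  have ut: "u ^ 3 = real t" unfolding u_def by (rule u_cube)
  define \<mu> where "\<mu> = (\<Sum>s\<in>{1..t}. expectation (xi s))"
  interpret H: Hoeffding_ineq P "{1..t}" xi "\<lambda>_. 0" "\<lambda>_. 1" \<mu>
  proof unfold_locales
    show "finite {1..t}" by simp
    show "indep_vars (\<lambda>_. borel) xi {1..t}" by (rule xi_indep)
    show "AE x in P. xi i x \<in> {0..1}" for i by (auto simp: xi_def)
  qed (simp add: \<mu>_def)
  define \<beta> where "\<beta> = u\<^sup>2 / (2 * real M)"
  have mu_ge: "\<mu> \<ge> u\<^sup>2 / real M"
  proof -
    have "(\<Sum>s\<in>{1..t}. (1 / u) * (1 / real M)) \<le> \<mu>"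
      unfolding \<mu>_def
    proof (rule sum_mono)
      fix s assume s: "s \<in> {1..t}"
      have "real s powr (1/3) \<le> u" unfolding u_def using s by (intro powr_mono2) auto
      then have "1 / u \<le> 1 / real s powr (1/3)" using s u0 by (intro divide_left_mono) auto
      then have "(1 / u) * (1 / real M) \<le> (1 / real s powr (1/3)) * (1 / real M)"
        using M1 by (intro mult_right_mono) auto
      then show "(1 / u) * (1 / real M) \<le> expectation (xi s)"
        using xi_exp[of s] s by simp
    qed
    also have "(\<Sum>s\<in>{1..t}. (1 / u) * (1 / real M)) = u\<^sup>2 / real M"
      using u0 M1 by (simp add: ut[symmetric] field_simps power2_eq_square power3_eq_cube)
    finally show ?thesis by simp
  qed
  define \<epsilon> where "\<epsilon> = \<mu> - \<beta>"
  have eb: "\<epsilon> \<ge> \<beta>" "\<beta> \<ge> 0" using mu_ge M1 unfolding \<epsilon>_def \<beta>_def by (auto simp: field_simps)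
  have "prob {x \<in> space P. (\<Sum>i\<in>{1..t}. xi i x) \<le> \<mu> - \<epsilon>} \<le> exp (-2 * \<epsilon>\<^sup>2 / (\<Sum>i\<in>{1..t}. (1 - 0)\<^sup>2))"
    by (rule H.Hoeffding_ineq_le) (use eb t in auto)
  moreover have "{\<omega> \<in> space P. real (card (Bset M (\<lambda>i. Y i \<omega>) t)) < \<beta>} \<subseteq> {x \<in> space P. (\<Sum>i\<in>{1..t}. xi i x) \<le> \<mu> - \<epsilon>}"
    unfolding card_Bset_sum \<epsilon>_def by auto
  moreover have "{x \<in> space P. (\<Sum>i\<in>{1..t}. xi i x) \<le> \<mu> - \<epsilon>} \<in> sets P" by measurable
  ultimately have 1: "prob {\<omega> \<in> space P. real (card (Bset M (\<lambda>i. Y i \<omega>) t)) < \<beta>} \<le> exp (-2 * \<epsilon>\<^sup>2 / real t)"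
  proof -
    assume a: "prob {x \<in> space P. (\<Sum>i\<in>{1..t}. xi i x) \<le> \<mu> - \<epsilon>} \<le> exp (-2 * \<epsilon>\<^sup>2 / (\<Sum>i\<in>{1..t}. (1 - 0)\<^sup>2))"
      and b: "{\<omega> \<in> space P. real (card (Bset M (\<lambda>i. Y i \<omega>) t)) < \<beta>} \<subseteq> {x \<in> space P. (\<Sum>i\<in>{1..t}. xi i x) \<le> \<mu> - \<epsilon>}"
      and c: "{x \<in> space P. (\<Sum>i\<in>{1..t}. xi i x) \<le> \<mu> - \<epsilon>} \<in> sets P"
    have "(\<Sum>i\<in>{1..t}. ((1::real) - 0)\<^sup>2) = real t" by simp
    with a have a': "prob {x \<in> space P. (\<Sum>i\<in>{1..t}. xi i x) \<le> \<mu> - \<epsilon>} \<le> exp (-2 * \<epsilon>\<^sup>2 / real t)" by simp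
    show ?thesis using finite_measure_mono[OF b c] a' by linarith
  qed
  have "-2 * \<epsilon>\<^sup>2 / real t \<le> -2 * \<beta>\<^sup>2 / real t"
    using eb t by (auto simp: divide_right_mono power_mono)
  also have "-2 * \<beta>\<^sup>2 / real t = - u / (2 * (real M)\<^sup>2)"
    unfolding \<beta>_def using ut[symmetric] u0 M1 by (simp add: field_simps power2_eq_square power3_eq_cube)
  finally have "exp (-2 * \<epsilon>\<^sup>2 / real t) \<le> exp (- u / (2 * (real M)\<^sup>2))" by simp
  with 1 show ?thesis unfolding \<beta>_def u_def by linarith
qed

end



lemma u_cube': "(real t powr (1/3)) ^ 3 = real t"
proof -
  have "(real t powr (1/3)) ^ 3 = real t powr (1/3 + 1/3 + 1/3)"
    unfolding power3_eq_cube by (simp only: powr_add)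
  then show ?thesis by simp
qed

lemma exp_ge_pow: assumes "(x::real) \<ge> 0" shows "x ^ n / fact n \<le> exp x"
proof -
  have "sum (\<lambda>k. x ^ k /\<^sub>R fact k) {n} \<le> (\<Sum>k. x ^ k /\<^sub>R fact k)"
    by (rule sum_le_suminf) (use assms summable_exp_generic[of x] in auto)
  moreover have "(\<Sum>k. x ^ k /\<^sub>R fact k) = exp x" by (simp add: exp_def)
  moreover have "sum (\<lambda>k. x ^ k /\<^sub>R fact k) {n} = x ^ n / fact n" by (simp add: divide_inverse mult.commute)
  ultimately show ?thesis by simp
qed

lemma summable_q: "summable (\<lambda>j. 1 / (real (Suc j))^2)"
proof -
  have "summable (\<lambda>n. inverse (real n ^ 2))" by (rule inverse_power_summable) simp
  then have "summable (\<lambda>n. inverse (real (Suc n) ^ 2))" using summable_Suc_iff[of "\<lambda>n. inverse (real n ^ 2)"] by simp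
  then show ?thesis by (simp add: inverse_eq_divide)
qed

lemma exp_neg_bound:
  fixes x :: real assumes "x > 0" shows "exp (- x) \<le> fact n / x ^ n"
proof -
  have "x ^ n / fact n \<le> exp x" using exp_ge_pow[of x n] assms by simp
  then have "x ^ n \<le> exp x * fact n" by (simp add: field_simps)
  then show ?thesis using assms by (simp add: exp_minus field_simps)
qed

context
  fixes P :: "'a measure" and Y :: "idx \<Rightarrow> 'a \<Rightarrow> real" and M :: nat and mu :: real
  assumes ps: "prob_space P"
    and M: "M > 1" and mu: "mu \<noteq> 0"
    and indep: "prob_space.indep_vars P (\<lambda>_. borel) Y UNIV"
    and normal: "\<And>m i. distributed P lborel (Y (Noise m i)) (\<lambda>x. ennreal (normal_density 0 1 x))"
    and gate: "\<And>t. distributed P lborel (Y (Gate t)) (indicator {0..1})"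
    and pick: "\<And>t. distributed P lborel (Y (Pick t)) (indicator {0..1})"
begin

interpretation prob_space P by (rule ps)

lemma Ym[measurable]: "Y i \<in> borel_measurable P"
  using indep unfolding indep_vars_def by auto

definition bet :: "nat \<Rightarrow> real" where "bet t = (real t powr (1/3))\<^sup>2 / (2 * real M)"

definition E1 where "E1 t = {\<omega> \<in> space P. real (card (Bset M (\<lambda>i. Y i \<omega>) t)) < bet t}"
definition E2 where "E2 t = (\<Union>n\<in>{1..t}. {\<omega> \<in> space P. bet t \<le> real n \<and> \<bar>mu\<bar> * real n / 2 < \<bar>\<Sum>i=1..n. Y (Noise 1 i) \<omega>\<bar>})"
definition E3 where "E3 t = (\<Union>(m,n,k)\<in>{2..M} \<times> {1..t} \<times> {..<t}.
   {\<omega> \<in> space P. k < n \<and> mu\<^sup>2 * bet t * real (n - k) / 4 \<le> (\<Sum>i=k+1..n. Y (Noise m i) \<omega>)\<^sup>2})"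
definition bad where "bad t = E1 t \<union> E2 t \<union> E3 t"

lemma card_Bset_sum': "real (card (Bset M (\<lambda>i. Y i \<omega>) t)) = (\<Sum>s\<in>{1..t}. if Y (Gate s) \<omega> < 1 / real s powr (1/3) \<and> 0 \<le> Y (Pick s) \<omega> \<and> Y (Pick s) \<omega> < 1 / real M then 1 else 0)"
proof -
  have "real (card (Bset M (\<lambda>i. Y i \<omega>) t)) = (\<Sum>s\<in>Bset M (\<lambda>i. Y i \<omega>) t. 1)"
    by simp
  also have "\<dots> = (\<Sum>s\<in>{1..t}. if Y (Gate s) \<omega> < 1 / real s powr (1/3) \<and> 0 \<le> Y (Pick s) \<omega> \<and> Y (Pick s) \<omega> < 1 / real M then 1 else 0)"
    unfolding Bset_def by (subst sum.inter_filter) auto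
  finally show ?thesis .
qed

lemma sets_E[measurable]: "E1 t \<in> sets P" "E2 t \<in> sets P" "E3 t \<in> sets P"
proof -
  have "E1 t = {\<omega> \<in> space P. (\<Sum>s\<in>{1..t}. if Y (Gate s) \<omega> < 1 / real s powr (1/3) \<and> 0 \<le> Y (Pick s) \<omega> \<and> Y (Pick s) \<omega> < 1 / real M then 1 else 0) < bet t}"
    unfolding E1_def card_Bset_sum' ..
  also have "\<dots> \<in> sets P" by measurable
  finally show "E1 t \<in> sets P" .
  have c2: "{\<omega> \<in> space P. bet t \<le> real n \<and> \<bar>mu\<bar> * real n / 2 < \<bar>\<Sum>i=1..n. Y (Noise 1 i) \<omega>\<bar>} \<in> sets P" for n
    by measurable
  show "E2 t \<in> sets P" unfolding E2_def by (intro sets.finite_UN c2) auto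
  have c3: "(case p of (m, n, k) \<Rightarrow> {\<omega> \<in> space P. k < n \<and> mu\<^sup>2 * bet t * real (n - k) / 4 \<le> (\<Sum>i=k+1..n. Y (Noise m i) \<omega>)\<^sup>2}) \<in> sets P" for p
  proof -
    obtain m n k where p: "p = (m, n, k)" by (cases p) auto
    have "{\<omega> \<in> space P. k < n \<and> mu\<^sup>2 * bet t * real (n - k) / 4 \<le> (\<Sum>i=k+1..n. Y (Noise m i) \<omega>)\<^sup>2} \<in> sets P"
      by measurable
    then show ?thesis unfolding p by simp
  qed
  show "E3 t \<in> sets P" unfolding E3_def by (intro sets.finite_UN c3) auto
qed

lemma bad_sets[measurable]: "bad t \<in> sets P"
  unfolding bad_def by (intro sets.Un sets_E)

lemma bet_pos: "t \<ge> 1 \<Longrightarrow> bet t > 0"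
  unfolding bet_def using M by simp

lemma good:
  assumes t: "t \<ge> 1" and \<omega>: "\<omega> \<in> space P" "\<omega> \<notin> bad t"
  shows "T_run M mu (\<lambda>i. Y i \<omega>) t 1 > Max ((T_run M mu (\<lambda>i. Y i \<omega>) t) ` ({1..M} - {1}))"
proof (rule dom_det[OF M mu bet_pos[OF t]])
  show "bet t \<le> real (card (Bset M (\<lambda>i. Y i \<omega>) t))"
    using \<omega> unfolding bad_def E1_def by auto
next
  fix n assume n: "bet t \<le> real n" "n \<le> t"
  then have "n \<ge> 1" using bet_pos[OF t] by (cases n) auto
  then show "\<bar>\<Sum>i = 1..n. Y (Noise 1 i) \<omega>\<bar> \<le> \<bar>mu\<bar> * real n / 2"
    using \<omega> n unfolding bad_def E2_def by force
next
  fix m k n assume mkn: "m \<in> {2..M}" "k < n" "n \<le> t"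
  then have "(m, n, k) \<in> {2..M} \<times> {1..t} \<times> {..<t}" by auto
  then show "(\<Sum>i = k + 1..n. Y (Noise m i) \<omega>)\<^sup>2 < mu\<^sup>2 * bet t * real (n - k) / 4"
    using \<omega> mkn unfolding bad_def E3_def by force
qed

definition K0 where "K0 t = C18 / ((\<bar>mu\<bar> / 2) ^ 18 * bet t ^ 9)"

lemma C18_pos: "C18 > 0" unfolding C18_def by simp

lemma E2_comp:
  assumes t: "t \<ge> 1" and n: "n \<in> {1..t}"
  shows "prob {\<omega> \<in> space P. bet t \<le> real n \<and> \<bar>mu\<bar> * real n / 2 < \<bar>\<Sum>i=1..n. Y (Noise 1 i) \<omega>\<bar>} \<le> K0 t"
proof (cases "bet t \<le> real n")
  case False
  then show ?thesis unfolding K0_def using C18_pos bet_pos[OF t] mu by simp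
next
  case True
  define r where "r = \<bar>mu\<bar> * sqrt (real n) / 2"
  have r0: "r > 0" using n mu unfolding r_def by simp
  have "{\<omega> \<in> space P. bet t \<le> real n \<and> \<bar>mu\<bar> * real n / 2 < \<bar>\<Sum>i=1..n. Y (Noise 1 i) \<omega>\<bar>}
     \<subseteq> {\<omega> \<in> space P. r * sqrt (real (n - 0)) \<le> \<bar>\<Sum>i=0+1..n. Y (Noise 1 i) \<omega>\<bar>}"
  proof -
    have "r * sqrt (real (n - 0)) = \<bar>mu\<bar> * real n / 2" unfolding r_def
      by (simp add: mult.assoc)
    then show ?thesis by auto
  qed
  moreover have "{\<omega> \<in> space P. r * sqrt (real (n - 0)) \<le> \<bar>\<Sum>i=0+1..n. Y (Noise 1 i) \<omega>\<bar>} \<in> sets P"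
    by measurable
  ultimately have "prob {\<omega> \<in> space P. bet t \<le> real n \<and> \<bar>mu\<bar> * real n / 2 < \<bar>\<Sum>i=1..n. Y (Noise 1 i) \<omega>\<bar>}
      \<le> prob {\<omega> \<in> space P. r * sqrt (real (n - 0)) \<le> \<bar>\<Sum>i=0+1..n. Y (Noise 1 i) \<omega>\<bar>}"
    by (rule finite_measure_mono)
  also have "\<dots> \<le> C18 / r ^ 18"
    by (rule W_tail[OF ps indep normal]) (use n r0 in auto)
  also have "\<dots> \<le> K0 t"
  proof -
    have s18: "sqrt (real n) ^ 18 = real n ^ 9"
      using power_mult[of "sqrt (real n)" 2 9] by simp
    have r18: "r ^ 18 = (\<bar>mu\<bar> / 2) ^ 18 * real n ^ 9"
      unfolding r_def by (simp add: power_mult_distrib power_divide s18)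
    have "bet t ^ 9 \<le> real n ^ 9" using True bet_pos[OF t] by (intro power_mono) auto
    then have "(\<bar>mu\<bar> / 2) ^ 18 * bet t ^ 9 \<le> r ^ 18" unfolding r18 using mu by (intro mult_left_mono) auto
    moreover have "0 < (\<bar>mu\<bar> / 2) ^ 18 * bet t ^ 9" using mu bet_pos[OF t] by simp
    ultimately show ?thesis unfolding K0_def using C18_pos r0 by (intro divide_left_mono) auto
  qed
  finally show ?thesis .
qed

lemma E3_comp:
  assumes t: "t \<ge> 1"
  shows "prob {\<omega> \<in> space P. k < n \<and> mu\<^sup>2 * bet t * real (n - k) / 4 \<le> (\<Sum>i=k+1..n. Y (Noise m i) \<omega>)\<^sup>2} \<le> K0 t"
proof (cases "k < n")
  case False
  then show ?thesis unfolding K0_def using C18_pos bet_pos[OF t] mu by simp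
next
  case True
  define r where "r = \<bar>mu\<bar> * sqrt (bet t) / 2"
  have r0: "r > 0" using bet_pos[OF t] mu unfolding r_def by simp
  have eq: "mu\<^sup>2 * bet t * real (n - k) / 4 \<le> w\<^sup>2 \<longleftrightarrow> r * sqrt (real (n - k)) \<le> \<bar>w\<bar>" for w
  proof -
    have "mu\<^sup>2 * bet t * real (n - k) / 4 = (r * sqrt (real (n - k)))\<^sup>2"
      unfolding r_def using bet_pos[OF t] by (simp add: power_mult_distrib power_divide)
    moreover have "r * sqrt (real (n - k)) \<ge> 0" using r0 by simp
    ultimately show ?thesis
      by (metis abs_ge_zero abs_of_nonneg power2_le_iff_abs_le real_sqrt_abs real_sqrt_le_iff)
  qed
  have "{\<omega> \<in> space P. k < n \<and> mu\<^sup>2 * bet t * real (n - k) / 4 \<le> (\<Sum>i=k+1..n. Y (Noise m i) \<omega>)\<^sup>2}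
     = {\<omega> \<in> space P. r * sqrt (real (n - k)) \<le> \<bar>\<Sum>i=k+1..n. Y (Noise m i) \<omega>\<bar>}"
    using True eq by auto
  also have "prob \<dots> \<le> C18 / r ^ 18"
    by (rule W_tail[OF ps indep normal]) (use True r0 in auto)
  also have "C18 / r ^ 18 = K0 t"
  proof -
    have s18: "sqrt (bet t) ^ 18 = bet t ^ 9"
      using power_mult[of "sqrt (bet t)" 2 9] bet_pos[OF t] by simp
    have "r ^ 18 = (\<bar>mu\<bar> / 2) ^ 18 * bet t ^ 9"
      unfolding r_def by (simp add: power_mult_distrib power_divide s18)
    then show ?thesis unfolding K0_def by simp
  qed
  finally show ?thesis .
qed

definition A0 where "A0 = C18 * (2 / \<bar>mu\<bar>) ^ 18 * (2 * real M) ^ 9"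
definition Kb where "Kb = fact 12 * (2 * (real M)\<^sup>2) ^ 12 + A0 + real M * A0"

lemma u_pows:
  assumes "t \<ge> 1"
  shows "(real t powr (1/3)) ^ 18 = real t ^ 6" "(real t powr (1/3)) ^ 12 = real t ^ 4"
proof -
  have "(real t powr (1/3)) ^ 18 = ((real t powr (1/3)) ^ 3) ^ 6" by (simp flip: power_mult)
  then show "(real t powr (1/3)) ^ 18 = real t ^ 6" by (simp add: u_cube')
  have "(real t powr (1/3)) ^ 12 = ((real t powr (1/3)) ^ 3) ^ 4" by (simp flip: power_mult)
  then show "(real t powr (1/3)) ^ 12 = real t ^ 4" by (simp add: u_cube')
qed

lemma K0_eq: assumes t: "t \<ge> 1" shows "K0 t = A0 / real t ^ 6"
proof -
  have "bet t ^ 9 = (real t powr (1/3)) ^ 18 / (2 * real M) ^ 9"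
    unfolding bet_def by (simp add: power_divide flip: power_mult)
  also have "\<dots> = real t ^ 6 / (2 * real M) ^ 9" using u_pows[OF t] by simp
  finally have b9: "bet t ^ 9 = real t ^ 6 / (2 * real M) ^ 9" .
  show ?thesis unfolding K0_def A0_def b9 using mu M t
    by (simp add: field_simps power_divide)
qed

lemma bad_prob:
  assumes t: "t \<ge> 1"
  shows "prob (bad t) \<le> Kb / real t ^ 4"
proof -
  have tp: "real t > 0" using t by simp
  have p1: "prob (E1 t) \<le> fact 12 * (2 * (real M)\<^sup>2) ^ 12 / real t ^ 4"
  proof -
    define u where "u = real t powr (1/3)"
    have u0: "u > 0" using t unfolding u_def by simp
    have "prob (E1 t) \<le> exp (- u / (2 * (real M)\<^sup>2))"
      unfolding E1_def bet_def u_def using B_tail[OF ps indep gate pick _ t] M by simp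
    also have "\<dots> = exp (- (u / (2 * (real M)\<^sup>2)))" by simp
    also have "\<dots> \<le> fact 12 / (u / (2 * (real M)\<^sup>2)) ^ 12"
      by (rule exp_neg_bound) (use u0 M in simp)
    also have "\<dots> = fact 12 * (2 * (real M)\<^sup>2) ^ 12 / u ^ 12"
      using u0 M by (simp add: power_divide field_simps)
    also have "u ^ 12 = real t ^ 4" unfolding u_def by (rule u_pows(2)[OF t])
    finally show ?thesis .
  qed
  have p2: "prob (E2 t) \<le> A0 / real t ^ 4"
  proof -
    have "prob (E2 t) \<le> (\<Sum>n\<in>{1..t}. prob {\<omega> \<in> space P. bet t \<le> real n \<and> \<bar>mu\<bar> * real n / 2 < \<bar>\<Sum>i=1..n. Y (Noise 1 i) \<omega>\<bar>})"
      unfolding E2_def by (rule measure_UNION_le) auto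
    also have "\<dots> \<le> (\<Sum>n\<in>{1..t}. K0 t)"
      by (rule sum_mono) (rule E2_comp[OF t])
    also have "\<dots> = real t * (A0 / real t ^ 6)" using K0_eq[OF t] by simp
    also have "\<dots> \<le> A0 / real t ^ 4"
    proof -
      have A0p: "A0 \<ge> 0" unfolding A0_def using C18_pos by simp
      have "real t * (A0 / real t ^ 6) = A0 / real t ^ 5" using tp by (simp add: eval_nat_numeral field_simps)
      also have "\<dots> \<le> A0 / real t ^ 4"
        using A0p t by (intro divide_left_mono) (auto simp: power_increasing)
      finally show ?thesis .
    qed
    finally show ?thesis .
  qed
  have p3: "prob (E3 t) \<le> real M * A0 / real t ^ 4"
  proof -
    let ?I = "{2..M} \<times> {1..t} \<times> {..<t}"
    define F where "F = (\<lambda>(m,n,k). {\<omega> \<in> space P. k < n \<and> mu\<^sup>2 * bet t * real (n - k) / 4 \<le> (\<Sum>i=k+1..n. Y (Noise m i) \<omega>)\<^sup>2})"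
    have E3F: "E3 t = (\<Union>p\<in>?I. F p)" unfolding E3_def F_def by simp
    have "prob (E3 t) \<le> (\<Sum>p\<in>?I. prob (F p))"
      unfolding E3F
    proof (rule measure_UNION_le)
      fix p assume "p \<in> ?I"
      obtain m n k where p: "p = (m, n, k)" by (cases p) auto
      have "{\<omega> \<in> space P. k < n \<and> mu\<^sup>2 * bet t * real (n - k) / 4 \<le> (\<Sum>i=k+1..n. Y (Noise m i) \<omega>)\<^sup>2} \<in> sets P"
        by measurable
      then show "F p \<in> sets P" unfolding p F_def by simp
    qed simp
    also have "\<dots> \<le> (\<Sum>p\<in>?I. K0 t)"
    proof (rule sum_mono)
      fix p assume "p \<in> ?I"
      obtain m n k where p: "p = (m, n, k)" by (cases p) auto
      show "prob (F p) \<le> K0 t" unfolding p F_def using E3_comp[OF t, of k n m] by simp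
    qed
    also have "\<dots> = real (card ?I) * (A0 / real t ^ 6)" using K0_eq[OF t] by (simp add: case_prod_beta)
    also have "\<dots> \<le> real M * A0 / real t ^ 4"
    proof -
      have A0p: "A0 \<ge> 0" unfolding A0_def using C18_pos by simp
      have "card ?I = (M - 1) * (t * t)" by (simp add: card_cartesian_product)
      moreover have "real (M - 1) \<le> real M" by simp
      ultimately have "real (card ?I) \<le> real M * real t ^ 2"
        by (simp add: power2_eq_square mult_right_mono)
      then have "real (card ?I) * (A0 / real t ^ 6) \<le> real M * real t ^ 2 * (A0 / real t ^ 6)"
        using A0p tp by (intro mult_right_mono) auto
      also have "\<dots> = real M * A0 / real t ^ 4" using tp by (simp add: field_simps power_add[symmetric])
      finally show ?thesis .
    qed
    finally show ?thesis .
  qed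
  have "prob (bad t) \<le> prob (E1 t) + prob (E2 t) + prob (E3 t)"
  proof -
    have "prob (E1 t \<union> E2 t \<union> E3 t) \<le> prob (E1 t \<union> E2 t) + prob (E3 t)"
      by (rule measure_Un_le) auto
    moreover have "prob (E1 t \<union> E2 t) \<le> prob (E1 t) + prob (E2 t)"
      by (rule measure_Un_le) auto
    ultimately show ?thesis unfolding bad_def by linarith
  qed
  also have "\<dots> \<le> Kb / real t ^ 4"
  proof -
    have "Kb / real t ^ 4 = fact 12 * (2 * (real M)\<^sup>2) ^ 12 / real t ^ 4 + A0 / real t ^ 4 + real M * A0 / real t ^ 4"
      unfolding Kb_def by (simp add: add_divide_distrib)
    then show ?thesis using p1 p2 p3 by linarith
  qed
  finally show ?thesis .
qed

definition Zq where "Zq = (\<Sum>j. 1 / (real (Suc j))^2)"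

lemma Kb_nonneg: "Kb \<ge> 0"
  unfolding Kb_def A0_def using C18_pos by simp

lemma t0_tail: "emeasure P {\<omega> \<in> space P. enat n < t0 M mu (\<lambda>i. Y i \<omega>)}
   \<le> ennreal (Kb * Zq * (1 / (real (Suc n))^2))"
proof -
  have sub: "{\<omega> \<in> space P. enat n < t0 M mu (\<lambda>i. Y i \<omega>)} \<subseteq> (\<Union>j. bad (n + 1 + j))"
  proof
    fix \<omega> assume w: "\<omega> \<in> {\<omega> \<in> space P. enat n < t0 M mu (\<lambda>i. Y i \<omega>)}"
    show "\<omega> \<in> (\<Union>j. bad (n + 1 + j))"
    proof (rule ccontr)
      assume nb: "\<omega> \<notin> (\<Union>j. bad (n + 1 + j))"
      have "dominates_after M mu (\<lambda>i. Y i \<omega>) n"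
        unfolding dominates_after_def
      proof (intro allI impI)
        fix t assume "t > n"
        define j where "j = t - n - 1"
        have tj: "t = n + 1 + j" unfolding j_def using \<open>t > n\<close> by simp
        then have "\<omega> \<notin> bad t" using nb by auto
        then show "T_run M mu (\<lambda>i. Y i \<omega>) t 1 > Max ((T_run M mu (\<lambda>i. Y i \<omega>) t) ` ({1..M} - {1}))"
          using good[of t \<omega>] w tj by auto
      qed
      then have "t0 M mu (\<lambda>i. Y i \<omega>) \<le> enat n"
        unfolding t0_def by (auto intro: Least_le)
      then show False using w by auto
    qed
  qed
  have "emeasure P {\<omega> \<in> space P. enat n < t0 M mu (\<lambda>i. Y i \<omega>)} \<le> emeasure P (\<Union>j. bad (n + 1 + j))"
    by (rule emeasure_mono[OF sub]) measurable
  also have "\<dots> \<le> (\<Sum>j. emeasure P (bad (n + 1 + j)))"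
    by (rule emeasure_subadditive_countably) auto
  also have "\<dots> \<le> (\<Sum>j. ennreal (Kb * (1 / (real (Suc n))^2) * (1 / (real (Suc j))^2)))"
  proof (rule suminf_le[OF _ summableI summableI])
    fix j
    have t1: "n + 1 + j \<ge> 1" by simp
    have "emeasure P (bad (n + 1 + j)) = ennreal (prob (bad (n + 1 + j)))" by (simp add: emeasure_eq_measure)
    also have "\<dots> \<le> ennreal (Kb / real (n + 1 + j) ^ 4)" using bad_prob[OF t1] by (simp add: ennreal_leI)
    also have "Kb / real (n + 1 + j) ^ 4 \<le> Kb * (1 / (real (Suc n))^2) * (1 / (real (Suc j))^2)"
    proof -
      have a: "real (Suc n) ^ 2 \<le> real (n + 1 + j) ^ 2" by (intro power_mono) auto
      have b: "real (Suc j) ^ 2 \<le> real (n + 1 + j) ^ 2" by (intro power_mono) auto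
      have "real (Suc n) ^ 2 * real (Suc j) ^ 2 \<le> real (n + 1 + j) ^ 2 * real (n + 1 + j) ^ 2"
        by (intro mult_mono a b) auto
      also have "\<dots> = real (n + 1 + j) ^ 4" by (simp flip: power_add)
      finally have c: "real (Suc n) ^ 2 * real (Suc j) ^ 2 \<le> real (n + 1 + j) ^ 4" .
      have "Kb / real (n + 1 + j) ^ 4 \<le> Kb / (real (Suc n) ^ 2 * real (Suc j) ^ 2)"
        using Kb_nonneg c by (intro divide_left_mono) auto
      then show ?thesis by simp
    qed
    then have "ennreal (Kb / real (n + 1 + j) ^ 4) \<le> ennreal (Kb * (1 / (real (Suc n))^2) * (1 / (real (Suc j))^2))"
      by (rule ennreal_leI)
    finally show "emeasure P (bad (n + 1 + j)) \<le> ennreal (Kb * (1 / (real (Suc n))^2) * (1 / (real (Suc j))^2))" .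
  qed
  also have "\<dots> = ennreal (\<Sum>j. Kb * (1 / (real (Suc n))^2) * (1 / (real (Suc j))^2))"
    by (rule suminf_ennreal2) (use Kb_nonneg in simp, rule summable_mult[OF summable_q])
  also have "(\<Sum>j. Kb * (1 / (real (Suc n))^2) * (1 / (real (Suc j))^2)) = Kb * Zq * (1 / (real (Suc n))^2)"
    unfolding Zq_def using suminf_mult[OF summable_q, of "Kb * (1 / (real (Suc n))^2)"] by simp
  finally show ?thesis .
qed

lemma final_integral: "(\<integral>\<^sup>+ \<omega>. ennreal_of_enat (t0 M mu (\<lambda>i. Y i \<omega>)) \<partial>P) < \<infinity>"
proof -
  have m: "(\<lambda>\<omega>. t0 M mu (\<lambda>i. Y i \<omega>)) \<in> measurable P (count_space UNIV)"
    by (rule meas_t0) simp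
  have "(\<integral>\<^sup>+ \<omega>. ennreal_of_enat (t0 M mu (\<lambda>i. Y i \<omega>)) \<partial>P)
      = (\<Sum>n. emeasure P {\<omega> \<in> space P. enat n < t0 M mu (\<lambda>i. Y i \<omega>)})"
    by (rule nn_integral_enat_function[OF m])
  also have "\<dots> \<le> (\<Sum>n. ennreal (Kb * Zq * (1 / (real (Suc n))^2)))"
    by (rule suminf_le[OF _ summableI summableI]) (rule t0_tail)
  also have "\<dots> = ennreal (\<Sum>n. Kb * Zq * (1 / (real (Suc n))^2))"
  proof (rule suminf_ennreal2)
    have "Zq \<ge> 0" unfolding Zq_def by (rule suminf_nonneg[OF summable_q]) simp
    then show "0 \<le> Kb * Zq * (1 / (real (Suc n))^2)" for n using Kb_nonneg by simp
    show "summable (\<lambda>n. Kb * Zq * (1 / (real (Suc n))^2))" by (intro summable_mult summable_q)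
  qed
  also have "\<dots> < \<infinity>" by simp
  finally show ?thesis .
qed

end


theorem lemma4:
  fixes P :: "'a measure" and Y :: "idx \<Rightarrow> 'a \<Rightarrow> real" and M :: nat and mu :: real
  assumes "prob_space P"
    and "M > 1" and "mu \<noteq> 0"
    and "prob_space.indep_vars P (\<lambda>_. borel) Y UNIV"
    and "\<And>m i. distributed P lborel (Y (Noise m i)) (\<lambda>x. ennreal (normal_density 0 1 x))"
    and "\<And>t. distributed P lborel (Y (Gate t)) (indicator {0..1})"
    and "\<And>t. distributed P lborel (Y (Pick t)) (indicator {0..1})"
    and "\<And>t. distributed P lborel (Y (TieM t)) (indicator {0..1})"
    and "\<And>t. distributed P lborel (Y (TieK t)) (indicator {0..1})"
  shows "(\<lambda>\<omega>. ennreal_of_enat (t0 M mu (\<lambda>i. Y i \<omega>))) \<in> borel_measurable P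
     \<and> (\<integral>\<^sup>+ \<omega>. ennreal_of_enat (t0 M mu (\<lambda>i. Y i \<omega>)) \<partial>P) < \<infinity>"
proof
  have Yb: "\<And>i. Y i \<in> borel_measurable P"
    by (rule Ym[OF assms(1,2,3,4,5,6,7)])
  have m: "(\<lambda>\<omega>. t0 M mu (\<lambda>i. Y i \<omega>)) \<in> measurable P (count_space UNIV)"
    by (rule meas_t0[OF Yb])
  have "(\<lambda>\<omega>. (\<lambda>e \<omega>. ennreal_of_enat e) (t0 M mu (\<lambda>i. Y i \<omega>)) \<omega>) \<in> borel_measurable P"
    by (rule measurable_compose_countable[OF _ m]) simp
  then show "(\<lambda>\<omega>. ennreal_of_enat (t0 M mu (\<lambda>i. Y i \<omega>))) \<in> borel_measurable P" by simp
  show "(\<integral>\<^sup>+ \<omega>. ennreal_of_enat (t0 M mu (\<lambda>i. Y i \<omega>)) \<partial>P) < \<infinity>"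
    by (rule final_integral[OF assms(1,2,3,4,5,6,7)])
qed

end
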